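(* Let $n,m$ be positive integers, $Q$ an integer valued positive definite quadratic form on $\mathbb{Z}^n$, and $1=m_1<\cdots<m_l=m$ the positive divisors of $m$. Let $S_i=\{(k_1,\dots,k_n)\in\mathbb{Z}^n:\gcd(k_1,m)=m_i\}$ and $T_i=\{(k_1,\dots,k_n)\in\mathbb{Z}^n:m_i\mid k_1\}$, and for a subset $T\subset\mathbb{Z}^n$ set $\Theta_{Q,T}(q)=\sum_{(k_1,\dots,k_n)\in T}q^{Q(k_1,\dots,k_n)}$. Then for each $i$, both $\Theta_{Q,T_i}(q)$ and $\Theta_{Q,S_i}(q)$ are $\mathbb{Z}$-linear combinations of theta series $\Theta_{Q'}(q)=\sum_{k\in\mathbb{Z}^n}q^{Q'(k)}$ of integer valued positive definite quadratic forms $Q'$ on $\mathbb{Z}^n$.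
   Context: An integer valued positive definite quadratic form on $\mathbb{Z}^n$ is a quadratic form taking integer values on $\mathbb{Z}^n$ and positive definite over $\mathbb{R}$. *)

theory Defs
  imports Complex_Main "HOL-Computational_Algebra.Formal_Power_Series"
begin

text \<open>Integer vectors in Z^n, represented as functions nat => int that vanish
  outside the index range {0..<n}. The paper's coordinate k_1 is k 0.\<close>
definition zvecs :: "nat \<Rightarrow> (nat \<Rightarrow> int) set" where
  "zvecs n = {k. \<forall>i\<ge>n. k i = 0}"

definition int_pd_qf :: "nat \<Rightarrow> ((nat \<Rightarrow> int) \<Rightarrow> int) \<Rightarrow> bool" where
  "int_pd_qf n Q \<longleftrightarrow>
     (\<exists>A :: nat \<Rightarrow> nat \<Rightarrow> real.
        (\<forall>i j. A i j = A j i) \<and>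
        (\<forall>k\<in>zvecs n. real_of_int (Q k) =
            (\<Sum>i<n. \<Sum>j<n. A i j * real_of_int (k i) * real_of_int (k j))) \<and>
        (\<forall>x :: nat \<Rightarrow> real. (\<exists>i<n. x i \<noteq> 0) \<longrightarrow>
            (\<Sum>i<n. \<Sum>j<n. A i j * x i * x j) > 0))"

text \<open>Theta_{Q,T}(q) = sum over k in T of q^{Q(k)}, as a formal power series:
  the coefficient of q^N is the number of k in T with Q(k) = N.\<close>
definition theta_set :: "((nat \<Rightarrow> int) \<Rightarrow> int) \<Rightarrow> (nat \<Rightarrow> int) set \<Rightarrow> int fps" where
  "theta_set Q T = Abs_fps (\<lambda>N. int (card {k\<in>T. Q k = int N}))"

definition theta :: "nat \<Rightarrow> ((nat \<Rightarrow> int) \<Rightarrow> int) \<Rightarrow> int fps" where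
  "theta n Q = theta_set Q (zvecs n)"

definition Z_comb_thetas :: "nat \<Rightarrow> int fps \<Rightarrow> bool" where
  "Z_comb_thetas n F \<longleftrightarrow>
     (\<exists>cs :: (int \<times> ((nat \<Rightarrow> int) \<Rightarrow> int)) list.
        (\<forall>(c, Q')\<in>set cs. int_pd_qf n Q') \<and>
        F = (\<Sum>(c, Q')\<leftarrow>cs. fps_const c * theta n Q'))"

end

theory Submission
  imports Defs "HOL-Analysis.Analysis"
begin


lemma compact_box:
  "compact (PiE UNIV (\<lambda>i. if i<n then {-1..1} else {0::real}))"
proof -
  have "compactin (product_topology (\<lambda>_. euclidean) UNIV) (PiE UNIV (\<lambda>i. if i<n then {-1..1} else {0::real}))"
    unfolding compactin_PiE by auto
  then show ?thesis by (simp add: euclidean_product_topology compactin_euclidean_iff)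
qed

lemma pd_lower:
  fixes A :: "nat\<Rightarrow>nat\<Rightarrow>real"
  assumes n: "n>0" and pd: "\<forall>x::nat\<Rightarrow>real. (\<exists>i<n. x i \<noteq> 0) \<longrightarrow> (\<Sum>i<n. \<Sum>j<n. A i j * x i * x j) > 0"
  shows "\<exists>c>0. \<forall>x. (\<forall>i<n. \<bar>x i\<bar> \<le> 1) \<longrightarrow> (\<exists>i<n. \<bar>x i\<bar> = 1) \<longrightarrow> c \<le> (\<Sum>i<n. \<Sum>j<n. A i j * x i * x j)"
proof -
  define B where "B = PiE UNIV (\<lambda>i. if i<n then {-1..1} else {0::real})"
  define K where "K = B \<inter> (\<Union>i<n. {x. \<bar>x i\<bar> = 1})"
  define F where "F = (\<lambda>x::nat\<Rightarrow>real. (\<Sum>i<n. \<Sum>j<n. A i j * x i * x j))"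
  have cl: "closed (\<Union>i<n. {x::nat\<Rightarrow>real. \<bar>x i\<bar> = 1})"
  proof (intro closed_UN ballI)
    fix i show "closed {x::nat\<Rightarrow>real. \<bar>x i\<bar> = 1}"
      by (intro closed_Collect_eq continuous_intros continuous_on_product_then_coordinatewise continuous_on_id)
  qed simp
  have cK: "compact K" unfolding K_def B_def using compact_box cl by (rule compact_Int_closed)
  have ne: "(\<lambda>i. if i = 0 then 1 else 0) \<in> K" using n unfolding K_def B_def by auto
  have cont: "continuous_on K F" unfolding F_def
    by (intro continuous_intros continuous_on_product_then_coordinatewise continuous_on_id)
  obtain x0 where x0: "x0 \<in> K" "\<And>y. y\<in>K \<Longrightarrow> F x0 \<le> F y"
    using continuous_attains_inf[OF cK _ cont] ne by blast
  have "F x0 > 0"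
  proof -
    from x0(1) obtain i where "i<n" "\<bar>x0 i\<bar> = 1" unfolding K_def by auto
    then have "\<exists>i<n. x0 i \<noteq> 0" by auto
    then show ?thesis using pd unfolding F_def by blast
  qed
  moreover have "F x0 \<le> F x" if "\<forall>i<n. \<bar>x i\<bar> \<le> 1" "\<exists>i<n. \<bar>x i\<bar> = 1" for x
  proof -
    define y where "y = (\<lambda>i. if i<n then x i else 0)"
    have "y \<in> K" using that unfolding K_def B_def y_def by (auto simp: abs_le_iff)
    moreover have "F y = F x" unfolding F_def y_def by (intro sum.cong) auto
    ultimately show ?thesis using x0 by metis
  qed
  ultimately show ?thesis unfolding F_def by blast
qed

lemma finite_box: "finite {k\<in>zvecs n. \<forall>i<n. \<bar>k i\<bar> \<le> (b::int)}"
proof -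
  have "{k\<in>zvecs n. \<forall>i<n. \<bar>k i\<bar> \<le> b} \<subseteq> (\<lambda>f i. if i<n then f i else 0) ` PiE {..<n} (\<lambda>_. {-b..b})"
  proof
    fix k assume k: "k \<in> {k\<in>zvecs n. \<forall>i<n. \<bar>k i\<bar> \<le> b}"
    define f where "f = restrict k {..<n}"
    have "f \<in> PiE {..<n} (\<lambda>_. {-b..b})" using k unfolding f_def by (auto simp: abs_le_iff)
    moreover have "k = (\<lambda>i. if i<n then f i else 0)" using k unfolding f_def zvecs_def by auto
    ultimately show "k \<in> (\<lambda>f i. if i<n then f i else 0) ` PiE {..<n} (\<lambda>_. {-b..b})" by blast
  qed
  moreover have "finite (PiE {..<n} (\<lambda>_. {-b..b}))" by (intro finite_PiE) auto
  ultimately show ?thesis by (meson finite_imageI finite_subset)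
qed

lemma finite_level:
  assumes n: "n>0" and Q: "int_pd_qf n Q"
  shows "finite {k\<in>zvecs n. Q k = N}"
proof -
  obtain A :: "nat\<Rightarrow>nat\<Rightarrow>real" where
    QA: "\<forall>k\<in>zvecs n. real_of_int (Q k) = (\<Sum>i<n. \<Sum>j<n. A i j * real_of_int (k i) * real_of_int (k j))"
    and pd: "\<forall>x :: nat \<Rightarrow> real. (\<exists>i<n. x i \<noteq> 0) \<longrightarrow> (\<Sum>i<n. \<Sum>j<n. A i j * x i * x j) > 0"
    using Q unfolding int_pd_qf_def by blast
  obtain c where c: "c>0" "\<And>x. \<forall>i<n. \<bar>x i\<bar> \<le> 1 \<Longrightarrow> \<exists>i<n. \<bar>x i\<bar> = 1 \<Longrightarrow> c \<le> (\<Sum>i<n. \<Sum>j<n. A i j * x i * x j)"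
    using pd_lower[OF n pd] by blast
  define R where "R = sqrt (\<bar>real_of_int N\<bar> / c)"
  have bnd: "\<bar>k i\<bar> \<le> \<lceil>R\<rceil>" if k: "k\<in>zvecs n" "Q k = N" and i: "i<n" for k i
  proof -
    define M where "M = Max ((\<lambda>i. \<bar>real_of_int (k i)\<bar>) ` {..<n})"
    have fin: "finite ((\<lambda>i. \<bar>real_of_int (k i)\<bar>) ` {..<n})" by simp
    have ne: "(\<lambda>i. \<bar>real_of_int (k i)\<bar>) ` {..<n} \<noteq> {}" using n by auto
    have Mge: "\<bar>real_of_int (k j)\<bar> \<le> M" if "j<n" for j
      unfolding M_def using that fin by (intro Max_ge) auto
    obtain j0 where j0: "j0<n" "M = \<bar>real_of_int (k j0)\<bar>"
      using Max_in[OF fin ne] unfolding M_def by auto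
    have "\<bar>real_of_int (k i)\<bar> \<le> R"
    proof (cases "M = 0")
      case True
      then show ?thesis using Mge[OF i] R_def c(1) by auto
    next
      case False
      then have Mpos: "M > 0" using j0 by auto
      define y where "y = (\<lambda>i. real_of_int (k i) / M)"
      have "\<forall>i<n. \<bar>y i\<bar> \<le> 1" using Mge Mpos unfolding y_def by (auto simp: abs_divide)
      moreover have "\<exists>i<n. \<bar>y i\<bar> = 1" using j0 Mpos unfolding y_def by (auto simp: abs_divide)
      ultimately have "c \<le> (\<Sum>i<n. \<Sum>j<n. A i j * y i * y j)" by (rule c(2))
      also have "\<dots> = (\<Sum>i<n. \<Sum>j<n. A i j * real_of_int (k i) * real_of_int (k j)) / M^2"
        unfolding y_def by (simp add: sum_divide_distrib power2_eq_square)
      also have "\<dots> = real_of_int N / M^2" using bspec[OF QA k(1)] k(2) by simp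
      finally have "c * M^2 \<le> real_of_int N" using Mpos by (simp add: field_simps)
      then have "M^2 \<le> real_of_int N / c" using c(1) by (simp add: field_simps)
      also have "\<dots> \<le> \<bar>real_of_int N\<bar> / c" using c(1) by (simp add: divide_right_mono)
      finally have "M^2 \<le> \<bar>real_of_int N\<bar> / c" .
      then have "sqrt (M^2) \<le> R" unfolding R_def using real_sqrt_le_mono by blast
      then have "M \<le> R" using Mpos by simp
      then show ?thesis using Mge[OF i] by linarith
    qed
    then show ?thesis by linarith
  qed
  have "{k\<in>zvecs n. Q k = N} \<subseteq> {k\<in>zvecs n. \<forall>i<n. \<bar>k i\<bar> \<le> \<lceil>R\<rceil>}" using bnd by auto
  then show ?thesis using finite_box finite_subset by blast
qed


lemma zc_zero: "Z_comb_thetas n 0"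
  unfolding Z_comb_thetas_def by (rule exI[of _ "[]"]) simp

lemma zc_add: "Z_comb_thetas n F \<Longrightarrow> Z_comb_thetas n G \<Longrightarrow> Z_comb_thetas n (F + G)"
  unfolding Z_comb_thetas_def
proof (elim exE conjE)
  fix cs1 cs2 :: "(int \<times> ((nat \<Rightarrow> int) \<Rightarrow> int)) list"
  assume "\<forall>(c, Q')\<in>set cs1. int_pd_qf n Q'" "F = (\<Sum>(c, Q')\<leftarrow>cs1. fps_const c * theta n Q')"
     "\<forall>(c, Q')\<in>set cs2. int_pd_qf n Q'" "G = (\<Sum>(c, Q')\<leftarrow>cs2. fps_const c * theta n Q')"
  then show "\<exists>cs. (\<forall>(c, Q')\<in>set cs. int_pd_qf n Q') \<and> F + G = (\<Sum>(c, Q')\<leftarrow>cs. fps_const c * theta n Q')"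
    by (intro exI[of _ "cs1 @ cs2"]) auto
qed

lemma sum_list_smult:
  "(\<Sum>(c, Q')\<leftarrow>map (\<lambda>(c,Q'). (a*c, Q')) cs. fps_const c * theta n Q') = fps_const a * (\<Sum>(c, Q')\<leftarrow>cs. fps_const c * theta n Q')"
  by (induction cs) (auto simp: algebra_simps simp flip: fps_const_mult)

lemma zc_smult: "Z_comb_thetas n F \<Longrightarrow> Z_comb_thetas n (fps_const a * F)"
  unfolding Z_comb_thetas_def
proof (elim exE conjE)
  fix cs :: "(int \<times> ((nat \<Rightarrow> int) \<Rightarrow> int)) list"
  assume "\<forall>(c, Q')\<in>set cs. int_pd_qf n Q'" "F = (\<Sum>(c, Q')\<leftarrow>cs. fps_const c * theta n Q')"
  then show "\<exists>cs. (\<forall>(c, Q')\<in>set cs. int_pd_qf n Q') \<and> fps_const a * F = (\<Sum>(c, Q')\<leftarrow>cs. fps_const c * theta n Q')"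
    apply (intro exI[of _ "map (\<lambda>(c,Q'). (a*c, Q')) cs"] conjI)
     apply force
    unfolding sum_list_smult by simp
qed

lemma zc_diff: "Z_comb_thetas n F \<Longrightarrow> Z_comb_thetas n G \<Longrightarrow> Z_comb_thetas n (F - G)"
proof -
  assume "Z_comb_thetas n F" "Z_comb_thetas n G"
  moreover have "F - G = F + fps_const (-1) * G" by (simp add: fps_const_neg[symmetric] del: fps_const_neg)
  ultimately show ?thesis using zc_add[of n F "fps_const (-1) * G"] zc_smult[of n G "-1"] by metis
qed

lemma zc_sum: "finite I \<Longrightarrow> (\<And>i. i\<in>I \<Longrightarrow> Z_comb_thetas n (f i)) \<Longrightarrow> Z_comb_thetas n (\<Sum>i\<in>I. f i)"
  by (induction I rule: finite_induct) (auto intro: zc_add zc_zero)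

lemma zc_theta: "int_pd_qf n Q \<Longrightarrow> Z_comb_thetas n (theta n Q)"
  unfolding Z_comb_thetas_def by (intro exI[of _ "[(1,Q)]"]) auto

lemma theta_set_UN:
  assumes "finite I" and disj: "\<And>i j. i\<in>I \<Longrightarrow> j\<in>I \<Longrightarrow> i\<noteq>j \<Longrightarrow> S i \<inter> S j = {}"
    and fin: "\<And>i N. i\<in>I \<Longrightarrow> finite {k\<in>S i. Q k = N}"
  shows "theta_set Q (\<Union>i\<in>I. S i) = (\<Sum>i\<in>I. theta_set Q (S i))"
proof (rule fps_ext)
  fix N
  have "{k\<in>(\<Union>i\<in>I. S i). Q k = int N} = (\<Union>i\<in>I. {k\<in>S i. Q k = int N})" by auto
  then have "card {k\<in>(\<Union>i\<in>I. S i). Q k = int N} = (\<Sum>i\<in>I. card {k\<in>S i. Q k = int N})"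
    using assms by (auto intro!: card_UN_disjoint)
  then show "fps_nth (theta_set Q (\<Union>i\<in>I. S i)) N = fps_nth (\<Sum>i\<in>I. theta_set Q (S i)) N"
    unfolding theta_set_def by (simp add: fps_sum_nth)
qed

lemma T_part:
  assumes n: "n>0" and Q: "int_pd_qf n Q" and d: "d>0"
  shows "Z_comb_thetas n (theta_set Q {k\<in>zvecs n. int d dvd k 0})"
proof -
  define f where "f = (\<lambda>k::nat\<Rightarrow>int. k(0 := int d * k 0))"
  define Qd where "Qd = (\<lambda>k. Q (f k))"
  define s where "s = (\<lambda>i::nat. if i = 0 then real d else 1)"
  have fs: "real_of_int (f k i) = s i * real_of_int (k i)" for k i
    unfolding f_def s_def by auto
  have fz: "f k \<in> zvecs n" if "k \<in> zvecs n" for k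
    using that n unfolding f_def zvecs_def by auto
  obtain A :: "nat\<Rightarrow>nat\<Rightarrow>real" where
    sym: "\<forall>i j. A i j = A j i" and
    QA: "\<forall>k\<in>zvecs n. real_of_int (Q k) = (\<Sum>i<n. \<Sum>j<n. A i j * real_of_int (k i) * real_of_int (k j))"
    and pd: "\<forall>x :: nat \<Rightarrow> real. (\<exists>i<n. x i \<noteq> 0) \<longrightarrow> (\<Sum>i<n. \<Sum>j<n. A i j * x i * x j) > 0"
    using Q unfolding int_pd_qf_def by blast
  define A' where "A' = (\<lambda>i j. A i j * s i * s j)"
  have "int_pd_qf n Qd"
    unfolding int_pd_qf_def
  proof (intro exI[of _ A'] conjI allI ballI impI)
    fix i j show "A' i j = A' j i" unfolding A'_def using sym by (simp add: mult_ac)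
  next
    fix k assume k: "k \<in> zvecs n"
    have "real_of_int (Qd k) = (\<Sum>i<n. \<Sum>j<n. A i j * real_of_int (f k i) * real_of_int (f k j))"
      unfolding Qd_def using QA fz[OF k] by blast
    also have "\<dots> = (\<Sum>i<n. \<Sum>j<n. A' i j * real_of_int (k i) * real_of_int (k j))"
      unfolding fs A'_def by (intro sum.cong refl) (simp add: ac_simps)
    finally show "real_of_int (Qd k) = (\<Sum>i<n. \<Sum>j<n. A' i j * real_of_int (k i) * real_of_int (k j))" .
  next
    fix x :: "nat \<Rightarrow> real" assume "\<exists>i<n. x i \<noteq> 0"
    then obtain i where i: "i<n" "x i \<noteq> 0" by blast
    have "s i \<noteq> 0" using d unfolding s_def by simp
    then have "\<exists>i<n. s i * x i \<noteq> 0" using i by auto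
    then have "(\<Sum>i<n. \<Sum>j<n. A i j * (s i * x i) * (s j * x j)) > 0"
      using pd[rule_format, of "\<lambda>i. s i * x i"] by (simp only:)
    moreover have "(\<Sum>i<n. \<Sum>j<n. A i j * (s i * x i) * (s j * x j)) = (\<Sum>i<n. \<Sum>j<n. A' i j * x i * x j)"
      unfolding A'_def by (intro sum.cong refl) (simp add: ac_simps)
    ultimately show "(\<Sum>i<n. \<Sum>j<n. A' i j * x i * x j) > 0" by simp
  qed
  moreover have "theta_set Q {k\<in>zvecs n. int d dvd k 0} = theta n Qd"
    unfolding theta_def
  proof (rule fps_ext)
    fix N
    have inj: "inj_on f {k\<in>zvecs n. Qd k = int N}"
    proof (rule inj_onI)
      fix x y assume eq: "f x = f y"
      have "x i = y i" for i
      proof (cases "i = 0")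
        case True
        have "int d * x 0 = int d * y 0" using fun_cong[OF eq, of 0] by (simp add: f_def)
        then show ?thesis using d True by simp
      next
        case False
        then show ?thesis using fun_cong[OF eq, of i] by (simp add: f_def)
      qed
      then show "x = y" by (intro ext)
    qed
    have img: "f ` {k\<in>zvecs n. Qd k = int N} = {k\<in>{k\<in>zvecs n. int d dvd k 0}. Q k = int N}"
    proof
      show "f ` {k\<in>zvecs n. Qd k = int N} \<subseteq> {k\<in>{k\<in>zvecs n. int d dvd k 0}. Q k = int N}"
        using fz unfolding Qd_def by (auto simp: f_def)
    next
      show "{k\<in>{k\<in>zvecs n. int d dvd k 0}. Q k = int N} \<subseteq> f ` {k\<in>zvecs n. Qd k = int N}"
      proof
        fix k assume k: "k \<in> {k\<in>{k\<in>zvecs n. int d dvd k 0}. Q k = int N}"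
        define k' where "k' = k(0 := k 0 div int d)"
        have "f k' = k" using k unfolding f_def k'_def by auto
        moreover have "k' \<in> zvecs n" using k n unfolding k'_def zvecs_def by auto
        ultimately show "k \<in> f ` {k\<in>zvecs n. Qd k = int N}" using k unfolding Qd_def by force
      qed
    qed
    have "card {k\<in>{k\<in>zvecs n. int d dvd k 0}. Q k = int N} = card {k\<in>zvecs n. Qd k = int N}"
      using card_image[OF inj] img by simp
    then show "fps_nth (theta_set Q {k\<in>zvecs n. int d dvd k 0}) N = fps_nth (theta_set Qd (zvecs n)) N"
      unfolding theta_set_def by simp
  qed
  ultimately show ?thesis using zc_theta by simp
qed

lemma T_decomp:
  assumes m: "m>0" and d: "d dvd m"
  shows "{k\<in>zvecs n. int d dvd k 0} = (\<Union>e\<in>{e. d dvd e \<and> e dvd m}. {k\<in>zvecs n. gcd (k 0) (int m) = int e})"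
proof
  show "{k\<in>zvecs n. int d dvd k 0} \<subseteq> (\<Union>e\<in>{e. d dvd e \<and> e dvd m}. {k\<in>zvecs n. gcd (k 0) (int m) = int e})"
  proof
    fix k assume k: "k \<in> {k\<in>zvecs n. int d dvd k 0}"
    define e where "e = nat (gcd (k 0) (int m))"
    have ge: "int e = gcd (k 0) (int m)" unfolding e_def by simp
    have "int e dvd int m" unfolding ge by simp
    then have em: "e dvd m" by simp
    have "int d dvd int e" unfolding ge using k d by simp
    then have "d dvd e" by simp
    then show "k \<in> (\<Union>e\<in>{e. d dvd e \<and> e dvd m}. {k\<in>zvecs n. gcd (k 0) (int m) = int e})"
      using em ge k by auto
  qed
next
  show "(\<Union>e\<in>{e. d dvd e \<and> e dvd m}. {k\<in>zvecs n. gcd (k 0) (int m) = int e}) \<subseteq> {k\<in>zvecs n. int d dvd k 0}"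
  proof
    fix k assume "k \<in> (\<Union>e\<in>{e. d dvd e \<and> e dvd m}. {k\<in>zvecs n. gcd (k 0) (int m) = int e})"
    then obtain e where e: "d dvd e" "k \<in> zvecs n" "gcd (k 0) (int m) = int e" by auto
    have "int d dvd int e" using e(1) by simp
    also have "int e dvd k 0" unfolding e(3)[symmetric] by simp
    finally show "k \<in> {k\<in>zvecs n. int d dvd k 0}" using e(2) by simp
  qed
qed

lemma S_part:
  assumes n: "n>0" and m: "m>0" and Q: "int_pd_qf n Q"
  shows "d>0 \<Longrightarrow> d dvd m \<Longrightarrow> Z_comb_thetas n (theta_set Q {k\<in>zvecs n. gcd (k 0) (int m) = int d})"
proof (induction "m - d" arbitrary: d rule: less_induct)
  case less
  define S where "S = (\<lambda>e::nat. {k\<in>zvecs n. gcd (k 0) (int m) = int e})"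
  define D where "D = {e. d dvd e \<and> e dvd m}"
  have finD: "finite D" unfolding D_def using m by (auto intro: finite_subset[of _ "{..m}"] dest: dvd_imp_le)
  have dD: "d \<in> D" unfolding D_def using less by simp
  have "theta_set Q {k\<in>zvecs n. int d dvd k 0} = (\<Sum>e\<in>D. theta_set Q (S e))"
    unfolding T_decomp[OF m less(3)] S_def D_def
  proof (rule theta_set_UN)
    show "finite {e. d dvd e \<and> e dvd m}" using finD unfolding D_def .
  next
    fix i j :: nat assume "i \<noteq> j"
    then show "{k\<in>zvecs n. gcd (k 0) (int m) = int i} \<inter> {k\<in>zvecs n. gcd (k 0) (int m) = int j} = {}" by auto
  next
    fix i N
    have "{k\<in>{k\<in>zvecs n. gcd (k 0) (int m) = int i}. Q k = N} \<subseteq> {k\<in>zvecs n. Q k = N}" by auto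
    then show "finite {k\<in>{k\<in>zvecs n. gcd (k 0) (int m) = int i}. Q k = N}"
      using finite_level[OF n Q] finite_subset by blast
  qed
  also have "\<dots> = theta_set Q (S d) + (\<Sum>e\<in>D-{d}. theta_set Q (S e))"
    using sum.remove[OF finD dD] by simp
  finally have eq: "theta_set Q (S d) = theta_set Q {k\<in>zvecs n. int d dvd k 0} - (\<Sum>e\<in>D-{d}. theta_set Q (S e))"
    by simp
  have "Z_comb_thetas n (theta_set Q (S e))" if e: "e \<in> D-{d}" for e
  proof -
    have e1: "d dvd e" "e dvd m" "e \<noteq> d" using e unfolding D_def by auto
    have epos: "e > 0" using e1(2) m by (cases e) auto
    have "d \<le> e" using e1(1) epos by (rule dvd_imp_le)
    moreover have "e \<le> m" using e1(2) m by (rule dvd_imp_le)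
    ultimately have "m - e < m - d" using e1(3) by linarith
    then show ?thesis unfolding S_def using less(1) epos e1(2) by blast
  qed
  then have "Z_comb_thetas n (\<Sum>e\<in>D-{d}. theta_set Q (S e))" using finD by (intro zc_sum) auto
  moreover have "Z_comb_thetas n (theta_set Q {k\<in>zvecs n. int d dvd k 0})"
    using T_part[OF n Q less(2)] .
  ultimately have "Z_comb_thetas n (theta_set Q (S d))" unfolding eq by (rule zc_diff[rotated])
  then show ?case unfolding S_def .
qed

theorem lemma3p4:
  fixes n m d :: nat and Q :: "(nat \<Rightarrow> int) \<Rightarrow> int"
  assumes "n > 0" and "m > 0" and "int_pd_qf n Q"
    and "d > 0" and "d dvd m"
  shows "Z_comb_thetas n (theta_set Q {k\<in>zvecs n. int d dvd k 0})
       \<and> Z_comb_thetas n (theta_set Q {k\<in>zvecs n. gcd (k 0) (int m) = int d})"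
  using T_part[OF assms(1,3,4)] S_part[OF assms(1,2,3,4,5)] by blast

end
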